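(* Let $X$ be a continuous random variable with finite support $[a,b]$, and fix a positive integer $m$. For each $n > m$, let $X_1, \dots, X_n$ be i.i.d. samples from $X$ and let $X_{(1)} \le \dots \le X_{(n)}$ denote their order statistics. Then $E[X_{(k+m)} - X_{(k)}] \to 0$ as $n \to \infty$ uniformly for all $1 \le k \le n-m$; that is, for every $\varepsilon > 0$ there exists $N$ such that for all $n > N$ and all $1 \le k \le n-m$, $E[X_{(k+m)} - X_{(k)}] \le \varepsilon$. *)

theory Defs
  imports "HOL-Probability.Probability"
begin

text \<open>Support of a Borel measure on the reals: the set of points all of whose
  open neighbourhoods have positive measure (the smallest closed set of full measure).\<close>
definition measure_support :: "real measure \<Rightarrow> real set" where
  "measure_support M = {x. \<forall>e>0. emeasure M (ball x e) > 0}"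

text \<open>The k-th order statistic (1-indexed) of the sample x 0, ..., x (n-1).\<close>
definition order_stat :: "nat \<Rightarrow> nat \<Rightarrow> (nat \<Rightarrow> real) \<Rightarrow> real" where
  "order_stat n k x = sort (map x [0..<n]) ! (k - 1)"

end

theory Submission
  imports Defs
begin

lemma sorted_le_iff:
  fixes ys :: "real list"
  assumes "sorted ys" "p < length ys"
  shows "ys!p \<le> s \<longleftrightarrow> p < card {q. q < length ys \<and> ys!q \<le> s}"
proof
  assume h: "ys!p \<le> s"
  have "{..p} \<subseteq> {q. q < length ys \<and> ys!q \<le> s}"
    using assms h sorted_nth_mono by fastforce
  from card_mono[OF _ this] show "p < card {q. q < length ys \<and> ys!q \<le> s}" by simp
next
  assume h: "p < card {q. q < length ys \<and> ys!q \<le> s}"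
  show "ys!p \<le> s"
  proof (rule ccontr)
    assume "\<not> ys!p \<le> s"
    have "{q. q < length ys \<and> ys!q \<le> s} \<subseteq> {..<p}"
    proof
      fix q assume q: "q \<in> {q. q < length ys \<and> ys!q \<le> s}"
      show "q \<in> {..<p}"
      proof (rule ccontr)
        assume "q \<notin> {..<p}"
        then have "p \<le> q" by simp
        then have "ys!p \<le> ys!q" using sorted_nth_mono assms q by blast
        then show False using q \<open>\<not> ys!p \<le> s\<close> by simp
      qed
    qed
    from card_mono[OF _ this] h show False by simp
  qed
qed

lemma card_sort_le:
  fixes x :: "nat \<Rightarrow> real"
  shows "card {q. q < n \<and> sort (map x [0..<n]) ! q \<le> s} = card {i. i < n \<and> x i \<le> s}"
proof -
  have "length (filter (\<lambda>y. y \<le> s) (sort (map x [0..<n]))) = length (filter (\<lambda>y. y \<le> s) (map x [0..<n]))"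
    by (metis mset_filter mset_sort size_mset)
  moreover have "{q. q<n \<and> map x [0..<n] ! q \<le> s} = {i. i<n \<and> x i \<le> s}" by auto
  ultimately show ?thesis
    by (simp add: length_filter_conv_card)
qed

lemma os_le_iff:
  fixes x :: "nat \<Rightarrow> real"
  assumes "p < n"
  shows "sort (map x [0..<n]) ! p \<le> s \<longleftrightarrow> p < card {i. i < n \<and> x i \<le> s}"
  using sorted_le_iff[of "sort (map x [0..<n])" p s] assms card_sort_le[of n x s] by simp

lemma os_mem:
  fixes x :: "nat \<Rightarrow> real"
  assumes "p < n"
  shows "sort (map x [0..<n]) ! p \<in> x ` {..<n}"
proof -
  have "sort (map x [0..<n]) ! p \<in> set (sort (map x [0..<n]))" using assms by (intro nth_mem) simp
  then show ?thesis by auto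
qed

lemma gap_range:
  fixes x :: "nat \<Rightarrow> real"
  assumes "\<forall>i<n. x i \<in> {a..b}" "1 \<le> k" "k + m \<le> n"
  shows "order_stat n (k+m) x - order_stat n k x \<le> b - a"
proof -
  have "sort (map x [0..<n]) ! (k+m-1) \<in> x ` {..<n}" by (rule os_mem) (use assms in simp)
  then obtain i where i: "i < n" "sort (map x [0..<n]) ! (k+m-1) = x i" by auto
  have "sort (map x [0..<n]) ! (k-1) \<in> x ` {..<n}" by (rule os_mem) (use assms in simp)
  then obtain i' where i': "i' < n" "sort (map x [0..<n]) ! (k-1) = x i'" by auto
  have "x i \<le> b" "a \<le> x i'" using assms(1) i i' by auto
  then show ?thesis unfolding order_stat_def using i i' by simp
qed

lemma gap_bound:
  fixes x :: "nat \<Rightarrow> real"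
  assumes inr: "\<forall>i<n. x i \<in> {a..b}" and d: "\<delta> > 0" "b = a + real J * \<delta>"
    and cnt: "\<forall>j<J. m \<le> card {i. i<n \<and> x i \<in> {a + real j*\<delta> .. a + real (Suc j)*\<delta>}}"
    and k: "1 \<le> k" "k + m \<le> n"
  shows "order_stat n (k+m) x - order_stat n k x \<le> 2*\<delta>"
proof -
  define t where "t = sort (map x [0..<n]) ! (k-1)"
  define A where "A = {i. i < n \<and> x i \<le> t}"
  define C where "C = {i. i < n \<and> x i \<le> t + 2*\<delta>}"
  have "k - 1 < card A" unfolding A_def using os_le_iff[of "k-1" n x t] k by (simp add: t_def)
  then have kA: "k \<le> card A" by simp
  have tin: "t \<in> {a..b}" unfolding t_def using os_mem[of "k-1" n x] inr k by force
  have "k + m - 1 < card C"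
  proof (cases "b \<le> t + \<delta>")
    case True
    then have "C = {i. i < n}" unfolding C_def using inr d by force
    then show ?thesis using k by simp
  next
    case False
    define j where "j = nat \<lfloor>(t-a)/\<delta>\<rfloor>"
    have q0: "0 \<le> (t-a)/\<delta>" using tin d by simp
    have lo: "a + real j * \<delta> \<le> t"
    proof -
      have "real j \<le> (t-a)/\<delta>" unfolding j_def using q0 by linarith
      then show ?thesis using d by (simp add: field_simps)
    qed
    have hi: "t < a + real (Suc j) * \<delta>"
    proof -
      have "(t-a)/\<delta> < real j + 1" unfolding j_def using q0 by linarith
      then show ?thesis using d by (simp add: field_simps)
    qed
    have jJ: "Suc j < J"
    proof -
      have "t < a + (real J - 1) * \<delta>" using False d by (simp add: algebra_simps)
      then have "(t-a)/\<delta> < real J - 1" using d by (simp add: field_simps)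
      then have "real j < real J - 1" unfolding j_def using q0 by linarith
      then show ?thesis by linarith
    qed
    define B where "B = {i. i<n \<and> x i \<in> {a + real (Suc j)*\<delta> .. a + real (Suc (Suc j))*\<delta>}}"
    have mB: "m \<le> card B" using cnt jJ unfolding B_def by blast
    have disj: "A \<inter> B = {}" unfolding A_def B_def using hi by auto
    have sub: "A \<union> B \<subseteq> C" unfolding A_def B_def C_def using lo d
      by (auto simp: algebra_simps)
    have fA: "finite A" unfolding A_def by simp
    have fB: "finite B" unfolding B_def by simp
    have fC: "finite C" unfolding C_def by simp
    have "card A + card B \<le> card C"
      using card_Un_disjoint[OF fA fB disj] card_mono[OF fC sub] by simp
    then show ?thesis using kA mB k by simp
  qed
  then have "sort (map x [0..<n]) ! (k+m-1) \<le> t + 2*\<delta>"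
    using os_le_iff[of "k+m-1" n x "t+2*\<delta>"] k unfolding C_def by simp
  then show ?thesis unfolding order_stat_def t_def by simp
qed


lemma support_AE:
  fixes \<mu> :: "real measure"
  assumes sets: "sets \<mu> = sets borel" and supp: "measure_support \<mu> = S"
  shows "AE x in \<mu>. x \<in> S"
proof -
  define F where "F = {ball x e | x e. e > 0 \<and> emeasure \<mu> (ball x e) = 0}"
  have "\<And>U. U \<in> F \<Longrightarrow> open U" unfolding F_def by auto
  then obtain F' where F': "F' \<subseteq> F" "countable F'" "\<Union>F' = \<Union>F" by (rule Lindelof)
  have "\<Union>F' \<in> null_sets \<mu>"
  proof -
    have "(\<Union>U\<in>F'. U) \<in> null_sets \<mu>"
    proof (rule null_sets_UN')
      show "countable F'" by fact
      fix U assume "U \<in> F'"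
      then obtain x e where "U = ball x e" "emeasure \<mu> (ball x e) = 0" using F' unfolding F_def by blast
      then show "U \<in> null_sets \<mu>" using sets by (simp add: null_sets_def)
    qed
    then show ?thesis by simp
  qed
  moreover have "{x \<in> space \<mu>. x \<notin> S} \<subseteq> \<Union>F'"
  proof
    fix x assume "x \<in> {x \<in> space \<mu>. x \<notin> S}"
    then have "x \<notin> measure_support \<mu>" using supp by simp
    then obtain e where "e > 0" "\<not> emeasure \<mu> (ball x e) > 0" unfolding measure_support_def by auto
    then have "ball x e \<in> F" unfolding F_def by (auto simp: not_less)
    moreover have "x \<in> ball x e" using \<open>e > 0\<close> by simp
    ultimately show "x \<in> \<Union>F'" using F' by blast
  qed
  ultimately show ?thesis by (rule AE_I')
qed

lemma fpps:
  assumes "prob_space \<mu>"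
  shows "finite_product_prob_space (\<lambda>_. \<mu>) {..<n::nat}"
proof -
  interpret prob_space \<mu> by fact
  show ?thesis
    by unfold_locales (auto simp: prob_space_axioms)
qed


lemma integral_bound_n:
  fixes \<mu> :: "real measure"
  assumes ps: "prob_space \<mu>" and sets: "sets \<mu> = sets borel"
    and AEab: "AE y in \<mu>. y \<in> {a..b}"
    and k: "1 \<le> k" "k + m \<le> n"
    and Bad: "Bad \<in> sets (PiM {..<n} (\<lambda>_. \<mu>))"
    and c: "c \<ge> 0"
    and good: "\<And>\<omega>. (\<forall>i<n. \<omega> i \<in> {a..b}) \<Longrightarrow> \<omega> \<in> space (PiM {..<n} (\<lambda>_. \<mu>)) \<Longrightarrow> \<omega> \<notin> Bad \<Longrightarrow>
        order_stat n (k+m) \<omega> - order_stat n k \<omega> \<le> c"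
  shows "(\<integral>\<omega>. (order_stat n (k + m) \<omega> - order_stat n k \<omega>) \<partial>(PiM {..<n} (\<lambda>_. \<mu>)))
     \<le> c + (b - a) * measure (PiM {..<n} (\<lambda>_. \<mu>)) Bad"
proof -
  let ?M = "PiM {..<n} (\<lambda>_. \<mu>)"
  let ?g = "\<lambda>\<omega>. order_stat n (k + m) \<omega> - order_stat n k \<omega>"
  interpret mu: prob_space \<mu> by fact
  interpret F: finite_product_prob_space "\<lambda>_. \<mu>" "{..<n}" using fpps[OF ps] .
  have sp: "space \<mu> = UNIV" using sets sets_eq_imp_space_eq by fastforce
  have ab1: "measure \<mu> {a..b} = 1"
  proof -
    have "{x \<in> space \<mu>. x \<in> {a..b}} \<in> mu.events" using sets sp by simp
    then have "mu.prob {x \<in> space \<mu>. x \<in> {a..b}} = 1" using mu.prob_Collect_eq_1[of "\<lambda>x. x \<in> {a..b}"] AEab by metis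
    moreover have "{x \<in> space \<mu>. x \<in> {a..b}} = {a..b}" using sp by auto
    ultimately show ?thesis by simp
  qed
  have "F.prob (PiE {..<n} (\<lambda>_. {a..b})) = (\<Prod>i\<in>{..<n}. measure \<mu> {a..b})"
    by (rule F.prob_times) (simp add: sets)
  then have "F.prob (PiE {..<n} (\<lambda>_. {a..b})) = 1" using ab1 by simp
  then have "AE \<omega> in ?M. \<omega> \<in> PiE {..<n} (\<lambda>_. {a..b})" by (rule F.AE_prob_1)
  then have AE1: "AE \<omega> in ?M. \<forall>i<n. \<omega> i \<in> {a..b}"
  proof eventually_elim
    case (elim \<omega>)
    then show ?case by (simp add: PiE_iff)
  qed
  have ab: "a \<le> b"
  proof (rule ccontr)
    assume "\<not> a \<le> b"
    then have "{a..b} = {}" by simp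
    with ab1 show False by simp
  qed
  show ?thesis
  proof (cases "integrable ?M ?g")
    case False
    then have "integral\<^sup>L ?M ?g = 0" by (rule not_integrable_integral_eq)
    moreover have "measure ?M Bad \<ge> 0" by simp
    ultimately show ?thesis using c ab by simp
  next
    case True
    have ih: "integrable ?M (\<lambda>\<omega>. c + (b - a) * indicator Bad \<omega>)"
      using Bad by (intro Bochner_Integration.integrable_add integrable_mult_right integrable_real_indicator)
        (auto simp: F.emeasure_finite less_top[symmetric])
    have "integral\<^sup>L ?M ?g \<le> integral\<^sup>L ?M (\<lambda>\<omega>. c + (b - a) * indicator Bad \<omega>)"
    proof (rule integral_mono_AE[OF True ih])
      show "AE \<omega> in ?M. ?g \<omega> \<le> c + (b - a) * indicator Bad \<omega>"
        using AE1 AE_space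
      proof eventually_elim
        case (elim \<omega>)
        show ?case
        proof (cases "\<omega> \<in> Bad")
          case True
          then show ?thesis using gap_range[of n \<omega> a b k m] elim k c by simp
        next
          case False
          then show ?thesis using good elim by simp
        qed
      qed
    qed
    also have "\<dots> = c + (b - a) * measure ?M Bad"
    proof -
      have ms1: "measure ?M (space ?M) = 1" using F.emeasure_space_1 by (simp add: measure_def)
      have i1: "integrable ?M (\<lambda>_. c)" by simp
      have i2: "integrable ?M (\<lambda>\<omega>. (b - a) * indicator Bad \<omega>)"
        using Bad by (intro integrable_mult_right integrable_real_indicator)
          (auto simp: F.emeasure_finite less_top[symmetric])
      have "integral\<^sup>L ?M (\<lambda>\<omega>. c + (b - a) * indicator Bad \<omega>)
          = integral\<^sup>L ?M (\<lambda>_. c) + integral\<^sup>L ?M (\<lambda>\<omega>. (b - a) * indicator Bad \<omega>)"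
        by (rule Bochner_Integration.integral_add[OF i1 i2])
      also have "integral\<^sup>L ?M (\<lambda>_. c) = c" using ms1 by simp
      also have "integral\<^sup>L ?M (\<lambda>\<omega>. (b - a) * indicator Bad \<omega>) = (b - a) * measure ?M (Bad \<inter> space ?M)"
        by simp
      also have "Bad \<inter> space ?M = Bad" using Bad sets.sets_into_space by blast
      finally show ?thesis .
    qed
    finally show ?thesis .
  qed
qed


lemma main_bound:
  fixes \<mu> :: "real measure"
  assumes ps: "prob_space \<mu>" and sets: "sets \<mu> = sets borel"
    and supp: "measure_support \<mu> = {a..b}" and eps: "\<epsilon> > 0" and m: "m > 0"
  shows "\<exists>N. \<forall>n>N. \<forall>k. 1 \<le> k \<and> k + m \<le> n \<longrightarrow>
    (\<integral>\<omega>. (order_stat n (k + m) \<omega> - order_stat n k \<omega>) \<partial>(PiM {..<n} (\<lambda>_. \<mu>))) \<le> \<epsilon>"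
proof -
  interpret mu: prob_space \<mu> by fact
  have sp: "space \<mu> = UNIV" using sets sets_eq_imp_space_eq by fastforce
  have AEab: "AE y in \<mu>. y \<in> {a..b}" by (rule support_AE[OF sets supp])
  show ?thesis
  proof (cases "b - a \<le> \<epsilon>")
    case True
    show ?thesis
    proof (intro exI allI impI)
      fix n k assume k: "1 \<le> k \<and> k + m \<le> n"
      have good: "order_stat n (k+m) \<omega> - order_stat n k \<omega> \<le> \<epsilon>"
        if "\<forall>i<n. \<omega> i \<in> {a..b}" for \<omega>
      proof -
        have "order_stat n (k+m) \<omega> - order_stat n k \<omega> \<le> b - a"
          using gap_range[of n \<omega> a b k m] that k by blast
        then show ?thesis using True by linarith
      qed
      have "(\<integral>\<omega>. (order_stat n (k + m) \<omega> - order_stat n k \<omega>) \<partial>(PiM {..<n} (\<lambda>_. \<mu>)))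
         \<le> \<epsilon> + (b - a) * measure (PiM {..<n} (\<lambda>_. \<mu>)) {}"
        using k eps good by (intro integral_bound_n[OF ps sets AEab]) auto
      then show "(\<integral>\<omega>. (order_stat n (k + m) \<omega> - order_stat n k \<omega>) \<partial>(PiM {..<n} (\<lambda>_. \<mu>))) \<le> \<epsilon>"
        by simp
    qed
  next
    case False
    then have ab: "a < b" using eps by linarith
    define J where "J = nat \<lceil>4*(b-a)/\<epsilon>\<rceil>"
    have Jge: "real J \<ge> 4*(b-a)/\<epsilon>" unfolding J_def by linarith
    have "4*(b-a)/\<epsilon> > 0" using ab eps by simp
    then have J0: "J > 0" using Jge by linarith
    define \<delta> where "\<delta> = (b-a)/real J"
    have d0: "\<delta> > 0" unfolding \<delta>_def using ab J0 by simp
    have bJ: "b = a + real J * \<delta>" unfolding \<delta>_def using J0 by simp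
    have dle: "\<delta> \<le> \<epsilon>/4"
    proof -
      have "4*(b-a) \<le> real J * \<epsilon>" using Jge eps by (simp add: field_simps)
      then show ?thesis unfolding \<delta>_def using J0 eps by (simp add: field_simps)
    qed
    define I where "I j = {a + real j * \<delta> .. a + real (Suc j) * \<delta>}" for j
    have Isets: "I j \<in> sets \<mu>" for j unfolding I_def using sets by simp
    have Ipos: "measure \<mu> (I j) > 0" if j: "j < J" for j
    proof -
      define c where "c = a + (real j + 1/2) * \<delta>"
      have "real j + 1/2 \<le> real J" using j by linarith
      then have "(real j + 1/2) * \<delta> \<le> real J * \<delta>" using d0 by (intro mult_right_mono) auto
      then have "c \<in> {a..b}" unfolding c_def using d0 bJ by auto
      then have "c \<in> measure_support \<mu>" using supp by simp
      then have "\<forall>e>0. emeasure \<mu> (ball c e) > 0" unfolding measure_support_def by simp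
      then have "emeasure \<mu> (ball c (\<delta>/2)) > 0" using d0 by simp
      moreover have "ball c (\<delta>/2) \<subseteq> I j" unfolding I_def c_def ball_def dist_real_def
        by (auto simp: algebra_simps abs_if split: if_splits)
      ultimately have "emeasure \<mu> (I j) > 0"
        using emeasure_mono[of "ball c (\<delta>/2)" "I j" \<mu>] Isets by (meson order_less_le_trans)
      then show ?thesis using mu.emeasure_eq_measure by simp
    qed
    define q where "q = Max ((\<lambda>j. 1 - measure \<mu> (I j)) ` {..<J})"
    have qge: "1 - measure \<mu> (I j) \<le> q" if "j < J" for j
      unfolding q_def using that by (intro Max_ge) auto
    have q0: "0 \<le> q"
    proof -
      have "measure \<mu> (I 0) \<le> 1" by (rule mu.prob_le_1)
      then show ?thesis using qge[of 0] J0 by linarith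
    qed
    have q1: "q < 1"
    proof -
      have "q \<in> (\<lambda>j. 1 - measure \<mu> (I j)) ` {..<J}" unfolding q_def using J0 by (intro Max_in) auto
      then show ?thesis using Ipos by auto
    qed
    have lim: "(\<lambda>L. q ^ L) \<longlonglongrightarrow> 0" using q0 q1 by (intro LIMSEQ_power_zero) simp
    define C where "C = \<epsilon> / (2 * (b - a) * real J * real m)"
    have C0: "C > 0" unfolding C_def using eps ab J0 m by simp
    obtain L0 where L0: "\<And>L. L \<ge> L0 \<Longrightarrow> q ^ L < C"
      using order_tendstoD(2)[OF lim C0] unfolding eventually_sequentially by blast
    show ?thesis
    proof (intro exI allI impI)
      fix n k assume nN: "n > m * L0" and k: "1 \<le> k \<and> k + m \<le> n"
      let ?M = "PiM {..<n} (\<lambda>_. \<mu>)"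
      interpret F: finite_product_prob_space "\<lambda>_. \<mu>" "{..<n}" using fpps[OF ps] .
      define L where "L = n div m"
      have LL0: "L0 \<le> L" unfolding L_def using nN m
        by (simp add: less_eq_div_iff_mult_less_eq mult.commute)
      have mLn: "m * L \<le> n" unfolding L_def by simp
      define Blk where "Blk r = {r*L..<r*L+L}" for r
      have Blkn: "Blk r \<subseteq> {..<n}" if "r < m" for r
      proof -
        have "Suc r * L \<le> m * L" using that by (intro mult_le_mono1) simp
        then show ?thesis unfolding Blk_def using mLn by auto
      qed
      define E where "E j r = PiE {..<n} (\<lambda>i. if i \<in> Blk r then UNIV - I j else UNIV)" for j r
      have Esets: "E j r \<in> sets ?M" for j r
        unfolding E_def using Isets sets by (intro sets_PiM_I_finite) auto
      have Eprob: "measure ?M (E j r) = (1 - measure \<mu> (I j)) ^ L" if r: "r < m" for j r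
      proof -
        have "measure ?M (E j r) = (\<Prod>i\<in>{..<n}. measure \<mu> (if i \<in> Blk r then UNIV - I j else UNIV))"
          unfolding E_def using Isets sets by (intro F.prob_times) auto
        also have "\<dots> = (\<Prod>i\<in>{..<n}. (if i \<in> Blk r then 1 - measure \<mu> (I j) else 1))"
        proof (rule prod.cong)
          fix i
          have "measure \<mu> (UNIV - I j) = 1 - measure \<mu> (I j)" using mu.prob_compl[OF Isets[of j]] sp by simp
          moreover have "measure \<mu> UNIV = 1" using mu.prob_space sp by simp
          ultimately show "measure \<mu> (if i \<in> Blk r then UNIV - I j else UNIV) = (if i \<in> Blk r then 1 - measure \<mu> (I j) else 1)"
            by simp
        qed simp
        also have "\<dots> = (1 - measure \<mu> (I j)) ^ card ({..<n} \<inter> {i. i \<in> Blk r})"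
          by (simp add: prod.If_cases)
        also have "{..<n} \<inter> {i. i \<in> Blk r} = Blk r" using Blkn[OF r] by auto
        also have "card (Blk r) = L" unfolding Blk_def by simp
        finally show ?thesis .
      qed
      define Bad where "Bad = (\<Union>p\<in>{..<J}\<times>{..<m}. E (fst p) (snd p))"
      have Badsets: "Bad \<in> sets ?M" unfolding Bad_def using Esets by auto
      have "measure ?M Bad \<le> (\<Sum>p\<in>{..<J}\<times>{..<m}. measure ?M (E (fst p) (snd p)))"
        unfolding Bad_def using Esets by (intro measure_UNION_le) auto
      also have "\<dots> \<le> (\<Sum>p\<in>{..<J}\<times>{..<m}. q ^ L)"
      proof (rule sum_mono)
        fix p assume p: "p \<in> {..<J}\<times>{..<m}"
        have "measure \<mu> (I (fst p)) \<le> 1" by (rule mu.prob_le_1)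
        then have "0 \<le> 1 - measure \<mu> (I (fst p))" by simp
        then have "(1 - measure \<mu> (I (fst p))) ^ L \<le> q ^ L" using qge[of "fst p"] p by (intro power_mono) auto
        then show "measure ?M (E (fst p) (snd p)) \<le> q ^ L" using Eprob p by auto
      qed
      also have "\<dots> = real J * real m * q ^ L" by simp
      finally have mBad: "measure ?M Bad \<le> real J * real m * q ^ L" .
      have good: "order_stat n (k+m) \<omega> - order_stat n k \<omega> \<le> 2 * \<delta>"
        if inr: "\<forall>i<n. \<omega> i \<in> {a..b}" and sp\<omega>: "\<omega> \<in> space ?M" and nb: "\<omega> \<notin> Bad" for \<omega>
      proof (rule gap_bound[OF inr d0 bJ _ ]) 
        show "1 \<le> k" "k + m \<le> n" using k by auto
        show "\<forall>j<J. m \<le> card {i. i < n \<and> \<omega> i \<in> {a + real j * \<delta>..a + real (Suc j) * \<delta>}}"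
        proof (intro allI impI)
          fix j assume j: "j < J"
          have ex: "\<exists>i. i \<in> Blk r \<and> \<omega> i \<in> I j" if r: "r < m" for r
          proof (rule ccontr)
            assume "\<not> (\<exists>i. i \<in> Blk r \<and> \<omega> i \<in> I j)"
            then have "\<omega> \<in> E j r" unfolding E_def using sp\<omega> by (auto simp: space_PiM PiE_iff)
            then show False using nb j r unfolding Bad_def by auto
          qed
          then obtain c where c: "\<And>r. r < m \<Longrightarrow> c r \<in> Blk r \<and> \<omega> (c r) \<in> I j" by metis
          have inj: "inj_on c {..<m}"
          proof (rule inj_onI)
            fix r r' assume r: "r \<in> {..<m}" and r': "r' \<in> {..<m}" and eq: "c r = c r'"
            show "r = r'"
            proof (rule ccontr)
              assume "r \<noteq> r'"
              then consider "r < r'" | "r' < r" by linarith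
              then show False
              proof cases
                case 1
                then have "Suc r * L \<le> r' * L" by (intro mult_le_mono1) simp
                then show False using c[of r] c[of r'] r r' eq unfolding Blk_def by auto
              next
                case 2
                then have "Suc r' * L \<le> r * L" by (intro mult_le_mono1) simp
                then show False using c[of r] c[of r'] r r' eq unfolding Blk_def by auto
              qed
            qed
          qed
          have "c ` {..<m} \<subseteq> {i. i < n \<and> \<omega> i \<in> I j}"
            using c Blkn by blast
          from card_mono[OF _ this] card_image[OF inj]
          show "m \<le> card {i. i < n \<and> \<omega> i \<in> {a + real j * \<delta>..a + real (Suc j) * \<delta>}}"
            unfolding I_def by simp
        qed
      qed
      have "(\<integral>\<omega>. (order_stat n (k + m) \<omega> - order_stat n k \<omega>) \<partial>?M) \<le> 2 * \<delta> + (b - a) * measure ?M Bad"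
        using k d0 good Badsets by (intro integral_bound_n[OF ps sets AEab]) auto
      also have "(b - a) * measure ?M Bad \<le> (b - a) * (real J * real m * q ^ L)"
        using mBad ab by (intro mult_left_mono) auto
      also have "\<dots> \<le> (b - a) * (real J * real m * C)"
        using L0[OF LL0] ab J0 m by (intro mult_left_mono) auto
      also have "(b - a) * (real J * real m * C) = \<epsilon> / 2"
        unfolding C_def using ab J0 m by (simp add: field_simps)
      finally show "(\<integral>\<omega>. (order_stat n (k + m) \<omega> - order_stat n k \<omega>) \<partial>?M) \<le> \<epsilon>"
        using dle by linarith
    qed
  qed
qed


theorem corollary1:
  fixes P :: "'a measure" and X :: "'a \<Rightarrow> real" and f :: "real \<Rightarrow> ennreal"
    and a b :: real and m :: nat
  assumes "prob_space P"
    and "distributed P lborel X f"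
    and "measure_support (distr P borel X) = {a..b}"
    and "m > 0"
  shows "\<forall>\<epsilon>>0. \<exists>N. \<forall>n>N. \<forall>k. 1 \<le> k \<and> k \<le> n - m \<longrightarrow>
           (\<integral>\<omega>. (order_stat n (k + m) \<omega> - order_stat n k \<omega>)
              \<partial>(PiM {..<n} (\<lambda>_. distr P borel X))) \<le> \<epsilon>"
proof (intro allI impI)
  fix \<epsilon> :: real assume eps: "\<epsilon> > 0"
  have Xm: "X \<in> measurable P borel"
    using distributed_measurable[OF assms(2)] measurable_cong_sets[OF refl sets_lborel] by blast
  have ps: "prob_space (distr P borel X)"
    by (rule prob_space.prob_space_distr[OF assms(1) Xm])
  have sets: "sets (distr P borel X) = sets borel" by simp
  obtain N where N: "\<forall>n>N. \<forall>k. 1 \<le> k \<and> k + m \<le> n \<longrightarrow>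
    (\<integral>\<omega>. (order_stat n (k + m) \<omega> - order_stat n k \<omega>) \<partial>(PiM {..<n} (\<lambda>_. distr P borel X))) \<le> \<epsilon>"
    using main_bound[OF ps sets assms(3) eps assms(4)] by blast
  show "\<exists>N. \<forall>n>N. \<forall>k. 1 \<le> k \<and> k \<le> n - m \<longrightarrow>
           (\<integral>\<omega>. (order_stat n (k + m) \<omega> - order_stat n k \<omega>)
              \<partial>(PiM {..<n} (\<lambda>_. distr P borel X))) \<le> \<epsilon>"
  proof (intro exI allI impI)
    fix n k assume n: "n > N" and k: "1 \<le> k \<and> k \<le> n - m"
    then have "1 \<le> k \<and> k + m \<le> n" by auto
    then show "(\<integral>\<omega>. (order_stat n (k + m) \<omega> - order_stat n k \<omega>)
              \<partial>(PiM {..<n} (\<lambda>_. distr P borel X))) \<le> \<epsilon>" using N n by blast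
  qed
qed

end
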